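(* Let $K$ be a simplicial complex, $X\cup Y=K_0$ a cover of its vertex set, $A:=X\cap Y$, $P:=\{\sigma\in K\mid\sigma\subset X\text{ or }\sigma\subset Y\text{ or }\sigma\cap A\neq\emptyset\}$, and $g\colon P\hookrightarrow K$ the poset inclusion. For a simplex $\sigma$ of $K$, let $\sigma\!\uparrow\! g$ be the poset of simplices $\tau\in P$ with $\sigma\subset\tau$ (ordered by inclusion), let $\psi_\sigma\colon\mathrm{St}(\sigma,A)\to\sigma\!\uparrow\! g$ be $\mu\mapsto\mu\cup\sigma$, and let $\phi_\sigma\colon\sigma\!\uparrow\! g\to\mathrm{St}(\sigma)$ be $\tau\mapsto\tau$. Then: (1) if $\sigma\in P$, then $\sigma\!\uparrow\! g$ is contractible and $\phi_\sigma$ is a weak equivalence; (2) if $\sigma\in K\setminus P$, then $\psi_\sigma$ is a weak equivalence.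
   Context: A simplicial complex is a collection of finite nonempty subsets of a fixed set closed under taking nonempty subsets; $K_0$ is its vertex set and its simplices form a poset under inclusion. $\mathrm{St}(\sigma):=\{\mu\in K\mid\sigma\cup\mu\in K\}$ and $\mathrm{St}(\sigma,A):=\{\mu\subset A\mid 0<|\mu|<\infty,\ \mu\cup\sigma\in K\}$, both regarded as posets under inclusion. Homotopical notions for posets/functors refer to their nerves. *)

theory Defs
  imports "HOL-Analysis.Analysis"
begin

definition simplicial_complex :: "'v set set \<Rightarrow> bool" where
  "simplicial_complex K \<longleftrightarrow>
     (\<forall>\<sigma>\<in>K. finite \<sigma> \<and> \<sigma> \<noteq> {}) \<and>
     (\<forall>\<sigma>\<in>K. \<forall>\<tau>. \<tau> \<subseteq> \<sigma> \<and> \<tau> \<noteq> {} \<longrightarrow> \<tau> \<in> K)"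

definition vertex_set :: "'v set set \<Rightarrow> 'v set" where
  "vertex_set K = {v. {v} \<in> K}"

definition star :: "'v set set \<Rightarrow> 'v set \<Rightarrow> 'v set set" where
  "star K \<sigma> = {\<mu> \<in> K. \<sigma> \<union> \<mu> \<in> K}"

definition star_in :: "'v set set \<Rightarrow> 'v set \<Rightarrow> 'v set \<Rightarrow> 'v set set" where
  "star_in K \<sigma> A = {\<mu>. \<mu> \<subseteq> A \<and> finite \<mu> \<and> \<mu> \<noteq> {} \<and> \<mu> \<union> \<sigma> \<in> K}"

text \<open>The under-poset sigma up g for the inclusion g : P -> K: elements of P containing sigma.\<close>
definition up_poset :: "'v set set \<Rightarrow> 'v set \<Rightarrow> 'v set set" where
  "up_poset P \<sigma> = {\<tau> \<in> P. \<sigma> \<subseteq> \<tau>}"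

text \<open>Simplices of the nerve: finite nonempty chains.\<close>
definition chains :: "'a set set \<Rightarrow> 'a set set set" where
  "chains P = {c. c \<subseteq> P \<and> finite c \<and> c \<noteq> {} \<and> (\<forall>p\<in>c. \<forall>q\<in>c. p \<subseteq> q \<or> q \<subseteq> p)}"

definition supp :: "('p \<Rightarrow> real) \<Rightarrow> 'p set" where
  "supp \<alpha> = {p. \<alpha> p \<noteq> 0}"

text \<open>Points of the geometric realization: barycentric coordinate functions supported on a simplex.\<close>
definition geom :: "'a set set \<Rightarrow> ('a set \<Rightarrow> real) set" where
  "geom P = {\<alpha>. (\<forall>p. 0 \<le> \<alpha> p) \<and> supp \<alpha> \<in> chains P \<and> sum \<alpha> (supp \<alpha>) = 1}"

definition cell :: "'p set \<Rightarrow> ('p \<Rightarrow> real) set" where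
  "cell c = {\<alpha>. (\<forall>p. 0 \<le> \<alpha> p) \<and> (\<forall>p. p \<notin> c \<longrightarrow> \<alpha> p = 0) \<and> sum \<alpha> c = 1}"

text \<open>The realization carries the weak (coherent) topology w.r.t. its closed simplices,
  each of which carries the Euclidean topology.\<close>
definition geom_top :: "'a set set \<Rightarrow> ('a set \<Rightarrow> real) topology" where
  "geom_top P = topology (\<lambda>U. U \<subseteq> geom P \<and>
      (\<forall>c\<in>chains P. openin (subtopology (powertop_real UNIV) (cell c)) (U \<inter> cell c)))"

lemma istopology_geom_top: "istopology (\<lambda>U. U \<subseteq> geom P \<and>
      (\<forall>c\<in>chains P. openin (subtopology (powertop_real UNIV) (cell c)) (U \<inter> cell c)))"
  unfolding istopology_def
proof (rule conjI; intro allI impI)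
  fix S T :: "('a set \<Rightarrow> real) set"
  assume a1: "(S \<subseteq> geom P \<and> (\<forall>c\<in>chains P. openin (subtopology (powertop_real UNIV) (cell c)) (S \<inter> cell c)))"
   and a2: "(T \<subseteq> geom P \<and> (\<forall>c\<in>chains P. openin (subtopology (powertop_real UNIV) (cell c)) (T \<inter> cell c)))"
  note a = a1 a2
  show "S \<inter> T \<subseteq> geom P \<and> (\<forall>c\<in>chains P. openin (subtopology (powertop_real UNIV) (cell c)) (S \<inter> T \<inter> cell c))"
  proof (intro conjI ballI)
    show "S \<inter> T \<subseteq> geom P" using a by blast
    fix c assume "c \<in> chains P"
    hence "openin (subtopology (powertop_real UNIV) (cell c)) ((S \<inter> cell c) \<inter> (T \<inter> cell c))"
      using a by (meson openin_Int)
    thus "openin (subtopology (powertop_real UNIV) (cell c)) (S \<inter> T \<inter> cell c)"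
      by (simp add: Int_ac)
  qed
next
  fix \<K> :: "('a set \<Rightarrow> real) set set"
  assume a: "\<forall>K\<in>\<K>. K \<subseteq> geom P \<and> (\<forall>c\<in>chains P. openin (subtopology (powertop_real UNIV) (cell c)) (K \<inter> cell c))"
  show "\<Union>\<K> \<subseteq> geom P \<and> (\<forall>c\<in>chains P. openin (subtopology (powertop_real UNIV) (cell c)) (\<Union>\<K> \<inter> cell c))"
  proof (intro conjI ballI)
    show "\<Union>\<K> \<subseteq> geom P" using a by blast
    fix c assume "c \<in> chains P"
    hence "openin (subtopology (powertop_real UNIV) (cell c)) (\<Union>K\<in>\<K>. K \<inter> cell c)"
      using a by (intro openin_Union) blast
    thus "openin (subtopology (powertop_real UNIV) (cell c)) (\<Union>\<K> \<inter> cell c)"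
      proof -
      have "\<Union>\<K> \<inter> cell c = (\<Union>K\<in>\<K>. K \<inter> cell c)" by blast
      then show ?thesis using \<open>openin _ (\<Union>K\<in>\<K>. K \<inter> cell c)\<close> by simp
    qed
  qed
qed

text \<open>Map of realizations induced by an order-preserving map h of posets.\<close>
definition nerve_map :: "('p \<Rightarrow> 'q) \<Rightarrow> ('p \<Rightarrow> real) \<Rightarrow> ('q \<Rightarrow> real)" where
  "nerve_map h \<alpha> = (\<lambda>q. sum \<alpha> {p. \<alpha> p \<noteq> 0 \<and> h p = q})"

definition sphere_base :: "nat \<Rightarrow> real" where
  "sphere_base = (\<lambda>i. if i = 0 then 1 else 0)"

text \<open>f induces a bijection on pi_0 and on all pi_n(X,x), n >= 1, for all basepoints x;
  pi_n(X,x) is the set of based maps (S^n, base) -> (X, x) modulo based homotopy.\<close>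
definition weak_homotopy_equivalence ::
    "'a topology \<Rightarrow> 'b topology \<Rightarrow> ('a \<Rightarrow> 'b) \<Rightarrow> bool" where
  "weak_homotopy_equivalence X Y f \<longleftrightarrow>
     continuous_map X Y f \<and>
     (\<forall>y\<in>topspace Y. \<exists>x\<in>topspace X. path_component_of Y (f x) y) \<and>
     (\<forall>n. \<forall>x\<in>topspace X.
        (\<forall>g h. continuous_map (nsphere n) X g \<and> g sphere_base = x \<and>
               continuous_map (nsphere n) X h \<and> h sphere_base = x \<and>
               homotopic_with (\<lambda>k. k sphere_base = f x) (nsphere n) Y (f \<circ> g) (f \<circ> h)
               \<longrightarrow> homotopic_with (\<lambda>k. k sphere_base = x) (nsphere n) X g h) \<and>
        (\<forall>k. continuous_map (nsphere n) Y k \<and> k sphere_base = f x \<longrightarrow>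
             (\<exists>g. continuous_map (nsphere n) X g \<and> g sphere_base = x \<and>
                  homotopic_with (\<lambda>k. k sphere_base = f x) (nsphere n) Y (f \<circ> g) k)))"

end

theory Submission
  imports Defs
begin


lemma openin_geom_top:
  "openin (geom_top P) U \<longleftrightarrow> U \<subseteq> geom P \<and>
     (\<forall>c\<in>chains P. openin (subtopology (powertop_real UNIV) (cell c)) (U \<inter> cell c))"
  unfolding geom_top_def by (subst topology_inverse'[OF istopology_geom_top]) simp

lemma cell_supp: "\<alpha> \<in> cell c \<Longrightarrow> supp \<alpha> \<subseteq> c"
  by (auto simp: cell_def supp_def)

lemma chainsD: assumes "c \<in> chains P" shows "c \<subseteq> P" "finite c" "c \<noteq> {}"
   "\<And>p q. p \<in> c \<Longrightarrow> q \<in> c \<Longrightarrow> p \<subseteq> q \<or> q \<subseteq> p"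
  using assms by (auto simp: chains_def)

lemma sum_supp: assumes "finite c" "supp \<alpha> \<subseteq> c" shows "sum \<alpha> (supp \<alpha>) = sum \<alpha> c"
  using assms by (intro sum.mono_neutral_left) (auto simp: supp_def)

lemma cell_subset_geom: assumes "c \<in> chains P" shows "cell c \<subseteq> geom P"
proof
  fix \<alpha> assume a: "\<alpha> \<in> cell c"
  have s: "supp \<alpha> \<subseteq> c" using cell_supp[OF a] .
  have fc: "finite c" using chainsD[OF assms] by simp
  have sum1: "sum \<alpha> (supp \<alpha>) = 1" using sum_supp[OF fc s] a by (simp add: cell_def)
  hence ne: "supp \<alpha> \<noteq> {}" by auto
  have "supp \<alpha> \<in> chains P" using s chainsD[OF assms] ne finite_subset[OF s fc]
    unfolding chains_def by blast
  thus "\<alpha> \<in> geom P" using a sum1 by (simp add: geom_def cell_def)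
qed

lemma geom_finite: "\<alpha> \<in> geom P \<Longrightarrow> finite (supp \<alpha>)"
  by (auto simp: geom_def chains_def)

lemma geom_in_cell: assumes "\<alpha> \<in> geom P" "supp \<alpha> \<subseteq> c" "finite c" shows "\<alpha> \<in> cell c"
  using assms sum_supp[OF assms(3,2)] by (auto simp: geom_def cell_def supp_def)

lemma geom_in_cell_supp: assumes "\<alpha> \<in> geom P" shows "\<alpha> \<in> cell (supp \<alpha>)" "supp \<alpha> \<in> chains P"
  using geom_in_cell[OF assms order_refl geom_finite[OF assms]] assms by (auto simp: geom_def)

lemma topspace_geom_top [simp]: "topspace (geom_top P) = geom P"
proof -
  have "openin (geom_top P) (geom P)"
    unfolding openin_geom_top
  proof (intro conjI ballI order_refl)
    fix c assume "c \<in> chains P"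
    hence "geom P \<inter> cell c = topspace (subtopology (powertop_real UNIV) (cell c))"
      using cell_subset_geom by fastforce
    thus "openin (subtopology (powertop_real UNIV) (cell c)) (geom P \<inter> cell c)"
      by (simp add: openin_subtopology_refl)
  qed
  hence "geom P \<subseteq> topspace (geom_top P)" by (simp add: openin_subset)
  moreover have "topspace (geom_top P) \<subseteq> geom P"
    using openin_topspace[of "geom_top P"] unfolding openin_geom_top by blast
  ultimately show ?thesis by blast
qed

lemma closedin_cell: assumes "finite c" shows "closedin (powertop_real UNIV) (cell c)"
proof -
  let ?S = "\<lambda>p. if p \<in> c then {0..} else {0::real}"
  have 1: "closedin (powertop_real UNIV) (PiE UNIV ?S)"
    by (simp add: closedin_product_topology)
  have 2: "closedin (powertop_real UNIV) {\<alpha> \<in> topspace (powertop_real UNIV). sum \<alpha> c \<in> {1}}"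
  proof (rule closedin_continuous_map_preimage[where Y=euclideanreal])
    show "continuous_map (powertop_real UNIV) euclideanreal (\<lambda>x. sum x c)"
      by (intro continuous_map_sum assms) (auto intro: continuous_map_product_projection)
  qed simp
  have "cell c = PiE UNIV ?S \<inter> {\<alpha> \<in> topspace (powertop_real UNIV). sum \<alpha> c \<in> {1}}"
    apply (auto simp: cell_def PiE_def Pi_def split: if_splits)
    by (metis order_refl)
  thus ?thesis using 1 2 by (simp add: closedin_Int)
qed

lemma continuous_map_into_geom_top:
  assumes cont: "continuous_map Z (powertop_real UNIV) F"
    and ing: "\<And>z. z \<in> topspace Z \<Longrightarrow> F z \<in> geom Q"
    and fin: "finite D" and sub: "\<And>z. z \<in> topspace Z \<Longrightarrow> supp (F z) \<subseteq> D"
  shows "continuous_map Z (geom_top Q) F"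
  unfolding continuous_map_def
proof (intro conjI allI impI)
  show "F \<in> topspace Z \<rightarrow> topspace (geom_top Q)" using ing by auto
  fix U assume U: "openin (geom_top Q) U"
  define C where "C = {cell d | d. d \<in> chains Q \<and> d \<subseteq> D}"
  define E where "E = \<Union>C"
  have finC: "finite C"
  proof -
    have "C \<subseteq> cell ` Pow D" by (auto simp: C_def)
    thus ?thesis using fin by (meson finite_Pow_iff finite_imageI finite_subset)
  qed
  have FE: "F z \<in> E" if "z \<in> topspace Z" for z
    using geom_in_cell_supp[OF ing[OF that]] sub[OF that] unfolding E_def C_def by blast
  have cl: "closedin (powertop_real UNIV) (E - U)"
  proof -
    have eq: "E - U = \<Union>((\<lambda>K. K - U) ` C)" by (auto simp: E_def)
    have "closedin (powertop_real UNIV) (K - U)" if "K \<in> C" for K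
    proof -
      obtain d where d: "K = cell d" "d \<in> chains Q" "d \<subseteq> D" using \<open>K \<in> C\<close> by (auto simp: C_def)
      have o: "openin (subtopology (powertop_real UNIV) (cell d)) (U \<inter> cell d)"
        using U d unfolding openin_geom_top by blast
      have "closedin (subtopology (powertop_real UNIV) (cell d)) (cell d - (U \<inter> cell d))"
        using closedin_diff[OF closedin_topspace o] by simp
      moreover have "cell d - (U \<inter> cell d) = cell d - U" by blast
      ultimately have "closedin (subtopology (powertop_real UNIV) (cell d)) (cell d - U)"
        by simp
      moreover have "closedin (powertop_real UNIV) (cell d)"
        using closedin_cell chainsD(2)[OF d(2)] by blast
      ultimately show ?thesis using closedin_trans_full d(1) by blast
    qed
    hence "closedin (powertop_real UNIV) (\<Union>((\<lambda>K. K - U) ` C))"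
      using finC by (intro closedin_Union) auto
    thus ?thesis using eq by simp
  qed
  then obtain V where V: "openin (powertop_real UNIV) V" "V = topspace (powertop_real UNIV) - (E - U)"
    by (simp add: closedin_def)
  have "{x \<in> topspace Z. F x \<in> U} = {x \<in> topspace Z. F x \<in> V}"
    using FE V(2) by auto
  thus "openin Z {x \<in> topspace Z. F x \<in> U}"
    using openin_continuous_map_preimage[OF cont V(1)] by simp
qed

lemma continuous_map_from_I_geom_top:
  fixes H :: "real \<times> ('a set \<Rightarrow> real) \<Rightarrow> 'c"
  assumes cc: "\<And>c. c \<in> chains Q \<Longrightarrow>
     continuous_map (prod_topology (top_of_set {0..1}) (subtopology (powertop_real UNIV) (cell c))) Z H"
  shows "continuous_map (prod_topology (top_of_set {0..1}) (geom_top Q)) Z H"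
  unfolding continuous_map_def
proof (intro conjI allI impI)
  let ?I = "top_of_set {0..1::real}"
  let ?C = "\<lambda>c. subtopology (powertop_real UNIV) (cell c)"
  show "H \<in> topspace (prod_topology ?I (geom_top Q)) \<rightarrow> topspace Z"
  proof
    fix x assume "x \<in> topspace (prod_topology ?I (geom_top Q))"
    then obtain t \<alpha> where x: "x = (t, \<alpha>)" "t \<in> {0..1}" "\<alpha> \<in> geom Q" by auto
    have "x \<in> topspace (prod_topology ?I (?C (supp \<alpha>)))"
      using x geom_in_cell_supp[OF x(3)] by auto
    thus "H x \<in> topspace Z" using continuous_map_funspace[OF cc[OF geom_in_cell_supp(2)[OF x(3)]]]
      by blast
  qed
  fix W assume W: "openin Z W"
  define Ob where "Ob = {x \<in> topspace (prod_topology ?I (geom_top Q)). H x \<in> W}"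
  define Oc where "Oc = (\<lambda>c. {x \<in> topspace (prod_topology ?I (?C c)). H x \<in> W})"
  have Oc_open: "openin (prod_topology ?I (?C c)) (Oc c)" if "c \<in> chains Q" for c
    unfolding Oc_def using openin_continuous_map_preimage[OF cc[OF that] W] .
  have Oc_sub: "Oc c \<subseteq> Ob" if "c \<in> chains Q" for c
    using cell_subset_geom[OF that] unfolding Oc_def Ob_def by auto
  show "openin (prod_topology ?I (geom_top Q)) {x \<in> topspace (prod_topology ?I (geom_top Q)). H x \<in> W}"
    unfolding Ob_def[symmetric]
  proof (subst openin_subopen, intro ballI)
    fix x assume "x \<in> Ob"
    then obtain t0 \<alpha>0 where x: "x = (t0, \<alpha>0)" "t0 \<in> {0..1}" "\<alpha>0 \<in> geom Q" "H (t0,\<alpha>0) \<in> W"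
      by (auto simp: Ob_def)
    define c0 where "c0 = supp \<alpha>0"
    have c0: "c0 \<in> chains Q" "\<alpha>0 \<in> cell c0" using geom_in_cell_supp[OF x(3)] by (auto simp: c0_def)
    have "continuous_map ?I (prod_topology ?I (?C c0)) (\<lambda>t. (t, \<alpha>0))"
      using c0 by (auto simp: continuous_map_pairwise o_def)
    hence "openin ?I {t \<in> topspace ?I. (t, \<alpha>0) \<in> Oc c0}"
      using openin_continuous_map_preimage Oc_open[OF c0(1)] by blast
    moreover have "t0 \<in> {t \<in> topspace ?I. (t, \<alpha>0) \<in> Oc c0}"
      using x c0 by (auto simp: Oc_def)
    ultimately obtain e where e: "e > 0" "\<And>t. t \<in> {0..1} \<Longrightarrow> dist t t0 < e \<Longrightarrow> (t, \<alpha>0) \<in> Oc c0"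
      unfolding openin_euclidean_subtopology_iff by auto
    define J where "J = {max 0 (t0 - e/2) .. min 1 (t0 + e/2)}"
    have Jsub: "J \<subseteq> {0..1}" by (auto simp: J_def)
    have Jc: "compactin ?I J" using Jsub by (simp add: compactin_subtopology J_def)
    define V where "V = {\<alpha> \<in> geom Q. \<forall>t\<in>J. (t, \<alpha>) \<in> Ob}"
    have Vopen: "openin (geom_top Q) V"
      unfolding openin_geom_top
    proof (intro conjI ballI)
      show "V \<subseteq> geom Q" by (auto simp: V_def)
      fix c assume c: "c \<in> chains Q"
      show "openin (?C c) (V \<inter> cell c)"
      proof (subst openin_subopen, intro ballI)
        fix \<alpha>1 assume a1: "\<alpha>1 \<in> V \<inter> cell c"
        have "J \<times> {\<alpha>1} \<subseteq> Oc c"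
          using a1 Jsub by (auto simp: V_def Ob_def Oc_def)
        then obtain U' V' where UV: "openin ?I U'" "openin (?C c) V'" "J \<subseteq> U'" "\<alpha>1 \<in> V'" "U' \<times> V' \<subseteq> Oc c"
          using tube_lemma_left[OF Oc_open[OF c] Jc, of \<alpha>1] a1 by auto
        have "V' \<subseteq> V \<inter> cell c"
        proof
          fix \<alpha> assume a: "\<alpha> \<in> V'"
          have ac: "\<alpha> \<in> cell c" using openin_subset[OF UV(2)] a by auto
          have "\<forall>t\<in>J. (t, \<alpha>) \<in> Ob" using UV(3,5) a Oc_sub[OF c] by blast
          thus "\<alpha> \<in> V \<inter> cell c" using ac cell_subset_geom[OF c] by (auto simp: V_def)
        qed
        thus "\<exists>T. openin (?C c) T \<and> \<alpha>1 \<in> T \<and> T \<subseteq> V \<inter> cell c" using UV by blast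
      qed
    qed
    define T where "T = {t \<in> {0..1}. dist t t0 < e/2}"
    have Topen: "openin ?I T"
    proof -
      have "T = {0..1} \<inter> ball t0 (e/2)" by (auto simp: T_def dist_commute)
      thus ?thesis by (simp add: openin_open_Int)
    qed
    have TJ: "T \<subseteq> J"
    proof
      fix t assume "t \<in> T"
      hence h: "0 \<le> t" "t \<le> 1" "t - t0 < e/2" "t0 - t < e/2"
        unfolding T_def dist_real_def by (auto simp del: less_divide_eq_numeral1)
      thus "t \<in> J" unfolding J_def by simp
    qed
    have a0V: "\<alpha>0 \<in> V"
    proof -
      have "(t, \<alpha>0) \<in> Ob" if "t \<in> J" for t
        using e(2)[of t] that Jsub Oc_sub[OF c0(1)] e(1) by (auto simp: J_def dist_real_def)
      thus ?thesis using x by (auto simp: V_def)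
    qed
    have "T \<times> V \<subseteq> Ob"
      using TJ unfolding V_def by auto
    moreover have "x \<in> T \<times> V" using x a0V e by (auto simp: T_def)
    moreover have "openin (prod_topology ?I (geom_top Q)) (T \<times> V)"
      using Topen Vopen by (simp add: openin_prod_Times_iff)
    ultimately show "\<exists>T. openin (prod_topology ?I (geom_top Q)) T \<and> x \<in> T \<and> T \<subseteq> Ob" by blast
  qed
qed

lemma nerve_map_alt: "nerve_map h \<alpha> q = sum \<alpha> {p \<in> supp \<alpha>. h p = q}"
  by (simp add: nerve_map_def supp_def)

lemma nerve_map_id_on: assumes "\<And>p. p \<in> supp \<alpha> \<Longrightarrow> h p = p" shows "nerve_map h \<alpha> = \<alpha>"
proof
  fix q
  have "{p \<in> supp \<alpha>. h p = q} = {p \<in> supp \<alpha>. p = q}" using assms by auto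
  also have "\<dots> = (if \<alpha> q \<noteq> 0 then {q} else {})" by (auto simp: supp_def)
  finally show "nerve_map h \<alpha> q = \<alpha> q" by (simp add: nerve_map_alt)
qed

lemma nerve_map_cell: assumes "\<alpha> \<in> cell c" "finite c"
  shows "nerve_map h \<alpha> q = sum \<alpha> {p \<in> c. h p = q}"
  unfolding nerve_map_alt using assms cell_supp[OF assms(1)]
  by (intro sum.mono_neutral_left) (auto simp: supp_def)

lemma geom_pos: "\<alpha> \<in> geom P \<Longrightarrow> p \<in> supp \<alpha> \<Longrightarrow> 0 < \<alpha> p"
  by (auto simp: geom_def supp_def order_less_le)

lemma geom_nonneg: "\<alpha> \<in> geom P \<Longrightarrow> 0 \<le> \<alpha> p"
  by (auto simp: geom_def)

lemma supp_nerve_map: assumes "\<alpha> \<in> geom P" shows "supp (nerve_map h \<alpha>) = h ` supp \<alpha>"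
proof (rule set_eqI, rule iffI)
  fix q assume "q \<in> supp (nerve_map h \<alpha>)"
  hence "nerve_map h \<alpha> q \<noteq> 0" by (simp add: supp_def)
  hence "{p \<in> supp \<alpha>. h p = q} \<noteq> {}"
    unfolding nerve_map_alt by (metis (no_types) sum.empty)
  thus "q \<in> h ` supp \<alpha>" by auto
next
  fix q assume "q \<in> h ` supp \<alpha>"
  hence ne: "{p \<in> supp \<alpha>. h p = q} \<noteq> {}" by auto
  have "0 < sum \<alpha> {p \<in> supp \<alpha>. h p = q}"
    using geom_finite[OF assms] ne geom_pos[OF assms] by (intro sum_pos) auto
  thus "q \<in> supp (nerve_map h \<alpha>)" by (simp add: supp_def nerve_map_alt)
qed

lemma sum_nerve_map: assumes "\<alpha> \<in> geom P" shows "sum (nerve_map h \<alpha>) (h ` supp \<alpha>) = 1"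
proof -
  have "sum (nerve_map h \<alpha>) (h ` supp \<alpha>) = sum (\<lambda>q. sum \<alpha> {p \<in> supp \<alpha>. h p = q}) (h ` supp \<alpha>)"
    by (simp add: nerve_map_alt)
  also have "\<dots> = sum \<alpha> (supp \<alpha>)"
    using geom_finite[OF assms] by (intro sum.group) auto
  also have "\<dots> = 1" using assms by (simp add: geom_def)
  finally show ?thesis .
qed

lemma nerve_map_geom:
  assumes a: "\<alpha> \<in> geom P" and hQ: "\<And>p. p \<in> P \<Longrightarrow> h p \<in> Q"
    and mono: "\<And>p q. p \<in> P \<Longrightarrow> q \<in> P \<Longrightarrow> p \<subseteq> q \<Longrightarrow> h p \<subseteq> h q"
  shows "nerve_map h \<alpha> \<in> geom Q"
proof -
  have ch: "supp \<alpha> \<in> chains P" using a by (simp add: geom_def)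
  have "h ` supp \<alpha> \<in> chains Q"
  proof -
    have "h ` supp \<alpha> \<subseteq> Q" using chainsD(1)[OF ch] hQ by auto
    moreover have "\<forall>x\<in>h ` supp \<alpha>. \<forall>y\<in>h ` supp \<alpha>. x \<subseteq> y \<or> y \<subseteq> x"
    proof (intro ballI)
      fix x y assume "x \<in> h ` supp \<alpha>" "y \<in> h ` supp \<alpha>"
      then obtain p q where pq: "p \<in> supp \<alpha>" "q \<in> supp \<alpha>" "x = h p" "y = h q" by auto
      have "p \<in> P" "q \<in> P" using chainsD(1)[OF ch] pq by auto
      moreover have "p \<subseteq> q \<or> q \<subseteq> p" using chainsD(4)[OF ch] pq(1,2) by blast
      ultimately show "x \<subseteq> y \<or> y \<subseteq> x" using mono[of p q] mono[of q p] pq(3,4) by auto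
    qed
    ultimately show ?thesis using chainsD[OF ch] unfolding chains_def by auto
  qed
  moreover have "\<forall>q. 0 \<le> nerve_map h \<alpha> q"
    using geom_nonneg[OF a] by (auto simp: nerve_map_alt intro: sum_nonneg)
  ultimately show ?thesis
    unfolding geom_def mem_Collect_eq supp_nerve_map[OF a] using sum_nerve_map[OF a] by blast
qed

lemma nerve_map_comp: assumes a: "\<alpha> \<in> geom P"
  shows "nerve_map g (nerve_map f \<alpha>) = nerve_map (g \<circ> f) \<alpha>"
proof
  fix r
  have fin: "finite (supp \<alpha>)" using geom_finite[OF a] .
  have "nerve_map g (nerve_map f \<alpha>) r = sum (\<lambda>q. sum \<alpha> {p \<in> supp \<alpha>. f p = q}) {q \<in> f ` supp \<alpha>. g q = r}"
    by (simp add: nerve_map_alt[of g] supp_nerve_map[OF a] nerve_map_alt[of f])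
  also have "\<dots> = sum (\<lambda>q. sum \<alpha> {p \<in> {p \<in> supp \<alpha>. g (f p) = r}. f p = q}) {q \<in> f ` supp \<alpha>. g q = r}"
    by (intro sum.cong refl arg_cong[where f="sum \<alpha>"]) auto
  also have "\<dots> = sum \<alpha> {p \<in> supp \<alpha>. g (f p) = r}"
    using fin by (intro sum.group) auto
  finally show "nerve_map g (nerve_map f \<alpha>) r = nerve_map (g \<circ> f) \<alpha> r"
    by (simp add: nerve_map_alt)
qed

definition cs :: "'p set set \<Rightarrow> ('p set \<Rightarrow> real) \<Rightarrow> 'p set \<Rightarrow> real" where
  "cs S \<alpha> p = sum \<alpha> {q \<in> S. q \<subseteq> p}"

definition ha :: "'p set set \<Rightarrow> ('p set \<Rightarrow> real) \<Rightarrow> real \<Rightarrow> 'p set \<Rightarrow> real" where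
  "ha S \<alpha> \<theta> p = min (cs S \<alpha> p) \<theta> - min (cs S \<alpha> p - \<alpha> p) \<theta>"

definition hb :: "'p set set \<Rightarrow> ('p set \<Rightarrow> real) \<Rightarrow> real \<Rightarrow> 'p set \<Rightarrow> real" where
  "hb S \<alpha> \<theta> p = max (cs S \<alpha> p) \<theta> - max (cs S \<alpha> p - \<alpha> p) \<theta>"

definition hm :: "'p set set \<Rightarrow> ('p set \<Rightarrow> 'q set) \<Rightarrow> ('p set \<Rightarrow> 'q set) \<Rightarrow> real \<Rightarrow> ('p set \<Rightarrow> real) \<Rightarrow> 'q set \<Rightarrow> real" where
  "hm S f g \<theta> \<alpha> r = (\<Sum>p\<in>S. (if f p = r then ha S \<alpha> \<theta> p else 0) + (if g p = r then hb S \<alpha> \<theta> p else 0))"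

definition hmap :: "('p set \<Rightarrow> 'q set) \<Rightarrow> ('p set \<Rightarrow> 'q set) \<Rightarrow> real \<times> ('p set \<Rightarrow> real) \<Rightarrow> 'q set \<Rightarrow> real" where
  "hmap f g x = hm (supp (snd x)) f g (fst x) (snd x)"

lemma ha_hb: "ha S \<alpha> \<theta> p + hb S \<alpha> \<theta> p = \<alpha> p"
  unfolding ha_def hb_def by linarith

lemma ha_nonneg: "0 \<le> \<alpha> p \<Longrightarrow> 0 \<le> ha S \<alpha> \<theta> p"
  unfolding ha_def by linarith

lemma hb_nonneg: "0 \<le> \<alpha> p \<Longrightarrow> 0 \<le> hb S \<alpha> \<theta> p"
  unfolding hb_def by linarith

lemma ha_pos: "0 < ha S \<alpha> \<theta> p \<Longrightarrow> cs S \<alpha> p - \<alpha> p < \<theta>"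
  unfolding ha_def by linarith

lemma hb_pos: "0 < hb S \<alpha> \<theta> p \<Longrightarrow> \<theta> < cs S \<alpha> p"
  unfolding hb_def by linarith

lemma ha_zero: "\<alpha> p = 0 \<Longrightarrow> ha S \<alpha> \<theta> p = 0"
  unfolding ha_def by simp

lemma hb_zero: "\<alpha> p = 0 \<Longrightarrow> hb S \<alpha> \<theta> p = 0"
  unfolding hb_def by simp

lemma cs_less:
  assumes fin: "finite S" and nn: "\<And>q. 0 \<le> \<alpha> q" and p1: "p1 \<in> S" and sub: "p2 \<subseteq> p1" "p2 \<noteq> p1"
  shows "cs S \<alpha> p2 \<le> cs S \<alpha> p1 - \<alpha> p1"
proof -
  have "cs S \<alpha> p1 - \<alpha> p1 = sum \<alpha> ({q \<in> S. q \<subseteq> p1} - {p1})"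
    unfolding cs_def using fin p1 by (subst sum_diff1) auto
  moreover have "sum \<alpha> {q \<in> S. q \<subseteq> p2} \<le> sum \<alpha> ({q \<in> S. q \<subseteq> p1} - {p1})"
    using fin nn sub by (intro sum_mono2) auto
  ultimately show ?thesis by (simp add: cs_def)
qed

lemma cs_bounds:
  assumes a: "\<alpha> \<in> geom Q" and p: "p \<in> supp \<alpha>"
  shows "0 \<le> cs (supp \<alpha>) \<alpha> p - \<alpha> p" "cs (supp \<alpha>) \<alpha> p \<le> 1"
proof -
  have fin: "finite (supp \<alpha>)" using geom_finite[OF a] .
  have "cs (supp \<alpha>) \<alpha> p - \<alpha> p = sum \<alpha> ({q \<in> supp \<alpha>. q \<subseteq> p} - {p})"
    unfolding cs_def using fin p by (subst sum_diff1) auto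
  also have "\<dots> \<ge> 0" using geom_nonneg[OF a] by (intro sum_nonneg) auto
  finally show "0 \<le> cs (supp \<alpha>) \<alpha> p - \<alpha> p" .
  have "cs (supp \<alpha>) \<alpha> p \<le> sum \<alpha> (supp \<alpha>)"
    unfolding cs_def using fin geom_nonneg[OF a] by (intro sum_mono2) auto
  thus "cs (supp \<alpha>) \<alpha> p \<le> 1" using a by (simp add: geom_def)
qed

lemma hm_eq:
  assumes fin: "finite S" and sub: "supp \<alpha> \<subseteq> S"
  shows "hm S f g \<theta> \<alpha> = hm (supp \<alpha>) f g \<theta> \<alpha>"
proof
  fix r
  have cs: "cs S \<alpha> p = cs (supp \<alpha>) \<alpha> p" for p
    unfolding cs_def using fin sub by (intro sum.mono_neutral_right) (auto simp: supp_def)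
  have "hm S f g \<theta> \<alpha> r = (\<Sum>p\<in>S. (if f p = r then ha (supp \<alpha>) \<alpha> \<theta> p else 0) + (if g p = r then hb (supp \<alpha>) \<alpha> \<theta> p else 0))"
    unfolding hm_def ha_def hb_def cs ..
  also have "\<dots> = hm (supp \<alpha>) f g \<theta> \<alpha> r"
    unfolding hm_def using fin sub
    by (intro sum.mono_neutral_right) (auto simp: supp_def ha_zero hb_zero)
  finally show "hm S f g \<theta> \<alpha> r = hm (supp \<alpha>) f g \<theta> \<alpha> r" .
qed

lemma hm_nonneg: "(\<And>p. 0 \<le> \<alpha> p) \<Longrightarrow> 0 \<le> hm S f g \<theta> \<alpha> r"
  unfolding hm_def by (intro sum_nonneg add_nonneg_nonneg) (auto intro: ha_nonneg hb_nonneg)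

lemma hm_supp: "supp (hm S f g \<theta> \<alpha>) \<subseteq> f ` S \<union> g ` S"
proof
  fix r assume "r \<in> supp (hm S f g \<theta> \<alpha>)"
  hence ne: "hm S f g \<theta> \<alpha> r \<noteq> 0" by (simp add: supp_def)
  show "r \<in> f ` S \<union> g ` S"
  proof (rule ccontr)
    assume "r \<notin> f ` S \<union> g ` S"
    hence "\<forall>p\<in>S. f p \<noteq> r \<and> g p \<noteq> r" by auto
    hence "hm S f g \<theta> \<alpha> r = 0" unfolding hm_def by (intro sum.neutral) auto
    thus False using ne by simp
  qed
qed

lemma hm_sum:
  assumes fin: "finite S"
  shows "sum (hm S f g \<theta> \<alpha>) (f ` S \<union> g ` S) = sum \<alpha> S"
proof -
  let ?R = "f ` S \<union> g ` S"
  have "sum (hm S f g \<theta> \<alpha>) ?R = (\<Sum>r\<in>?R. \<Sum>p\<in>S. (if f p = r then ha S \<alpha> \<theta> p else 0) + (if g p = r then hb S \<alpha> \<theta> p else 0))"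
    unfolding hm_def ..
  also have "\<dots> = (\<Sum>p\<in>S. \<Sum>r\<in>?R. (if f p = r then ha S \<alpha> \<theta> p else 0) + (if g p = r then hb S \<alpha> \<theta> p else 0))"
    by (rule sum.swap)
  also have "\<dots> = (\<Sum>p\<in>S. ha S \<alpha> \<theta> p + hb S \<alpha> \<theta> p)"
  proof (rule sum.cong[OF refl])
    fix p assume p: "p \<in> S"
    have "(\<Sum>r\<in>?R. (if f p = r then ha S \<alpha> \<theta> p else 0) + (if g p = r then hb S \<alpha> \<theta> p else 0))
        = (\<Sum>r\<in>?R. (if f p = r then ha S \<alpha> \<theta> p else 0)) + (\<Sum>r\<in>?R. (if g p = r then hb S \<alpha> \<theta> p else 0))"
      by (rule sum.distrib)
    also have "\<dots> = ha S \<alpha> \<theta> p + hb S \<alpha> \<theta> p"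
      using p fin by (simp add: sum.delta)
    finally show "(\<Sum>r\<in>?R. (if f p = r then ha S \<alpha> \<theta> p else 0) + (if g p = r then hb S \<alpha> \<theta> p else 0))
        = ha S \<alpha> \<theta> p + hb S \<alpha> \<theta> p" .
  qed
  also have "\<dots> = sum \<alpha> S" by (simp add: ha_hb)
  finally show ?thesis .
qed


lemma hm_nonzero:
  assumes "hm S f g \<theta> \<alpha> r \<noteq> 0"
  shows "\<exists>p\<in>S. (f p = r \<and> ha S \<alpha> \<theta> p \<noteq> 0) \<or> (g p = r \<and> hb S \<alpha> \<theta> p \<noteq> 0)"
proof (rule ccontr)
  assume "\<not> ?thesis"
  hence "\<forall>p\<in>S. (if f p = r then ha S \<alpha> \<theta> p else 0) + (if g p = r then hb S \<alpha> \<theta> p else 0) = 0"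
    by auto
  hence "hm S f g \<theta> \<alpha> r = 0" unfolding hm_def by (intro sum.neutral) blast
  thus False using assms by simp
qed

lemma hm_geom:
  assumes a: "\<alpha> \<in> geom Q"
    and fQ: "\<And>p. p \<in> Q \<Longrightarrow> f p \<in> Q'" and gQ: "\<And>p. p \<in> Q \<Longrightarrow> g p \<in> Q'"
    and fmono: "\<And>p q. p \<in> Q \<Longrightarrow> q \<in> Q \<Longrightarrow> p \<subseteq> q \<Longrightarrow> f p \<subseteq> f q"
    and gmono: "\<And>p q. p \<in> Q \<Longrightarrow> q \<in> Q \<Longrightarrow> p \<subseteq> q \<Longrightarrow> g p \<subseteq> g q"
    and fg: "\<And>p. p \<in> Q \<Longrightarrow> f p \<subseteq> g p"
  shows "hm (supp \<alpha>) f g \<theta> \<alpha> \<in> geom Q'"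
proof -
  let ?S = "supp \<alpha>"
  let ?\<beta> = "hm ?S f g \<theta> \<alpha>"
  have fin: "finite ?S" using geom_finite[OF a] .
  have ch: "?S \<in> chains Q" using a by (simp add: geom_def)
  have SQ: "?S \<subseteq> Q" using chainsD(1)[OF ch] .
  have cmp: "\<And>p q. p \<in> ?S \<Longrightarrow> q \<in> ?S \<Longrightarrow> p \<subseteq> q \<or> q \<subseteq> p" using chainsD(4)[OF ch] by blast
  have nn: "\<And>q. 0 \<le> \<alpha> q" using geom_nonneg[OF a] .
  have sR: "supp ?\<beta> \<subseteq> f ` ?S \<union> g ` ?S" by (rule hm_supp)
  have finR: "finite (f ` ?S \<union> g ` ?S)" using fin by simp
  have "sum ?\<beta> (f ` ?S \<union> g ` ?S) = sum \<alpha> ?S" by (rule hm_sum[OF fin])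
  hence sum1: "sum ?\<beta> (supp ?\<beta>) = 1"
    using sum_supp[OF finR sR] a by (simp add: geom_def)
  hence ne: "supp ?\<beta> \<noteq> {}" by auto
  have key: "f p1 \<subseteq> g p2 \<or> g p2 \<subseteq> f p1"
    if p: "p1 \<in> ?S" "p2 \<in> ?S" and h1: "ha ?S \<alpha> \<theta> p1 \<noteq> 0" and h2: "hb ?S \<alpha> \<theta> p2 \<noteq> 0" for p1 p2
  proof (cases "p1 \<subseteq> p2")
    case True
    hence "f p1 \<subseteq> f p2" using fmono SQ p by blast
    also have "f p2 \<subseteq> g p2" using fg SQ p by blast
    finally show ?thesis by blast
  next
    case False
    hence s21: "p2 \<subseteq> p1" "p2 \<noteq> p1" using cmp[OF p] by auto
    have c: "cs ?S \<alpha> p2 \<le> cs ?S \<alpha> p1 - \<alpha> p1" by (rule cs_less[OF fin nn p(1) s21])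
    have "0 < ha ?S \<alpha> \<theta> p1" using h1 ha_nonneg[of \<alpha> p1 ?S \<theta>] nn[of p1] by linarith
    hence "cs ?S \<alpha> p1 - \<alpha> p1 < \<theta>" by (rule ha_pos)
    moreover have "0 < hb ?S \<alpha> \<theta> p2" using h2 hb_nonneg[of \<alpha> p2 ?S \<theta>] nn[of p2] by linarith
    hence "\<theta> < cs ?S \<alpha> p2" by (rule hb_pos)
    ultimately show ?thesis using c by linarith
  qed
  have chain: "supp ?\<beta> \<in> chains Q'"
    unfolding chains_def
  proof (intro CollectI conjI ballI)
    show "supp ?\<beta> \<subseteq> Q'" using sR fQ gQ SQ by blast
    show "finite (supp ?\<beta>)" using finite_subset[OF sR finR] .
    show "supp ?\<beta> \<noteq> {}" using ne .
    fix x y assume x: "x \<in> supp ?\<beta>" and y: "y \<in> supp ?\<beta>"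
    obtain p1 where p1: "p1 \<in> ?S" "(f p1 = x \<and> ha ?S \<alpha> \<theta> p1 \<noteq> 0) \<or> (g p1 = x \<and> hb ?S \<alpha> \<theta> p1 \<noteq> 0)"
      using hm_nonzero[of ?S f g \<theta> \<alpha> x] x by (auto simp: supp_def)
    obtain p2 where p2: "p2 \<in> ?S" "(f p2 = y \<and> ha ?S \<alpha> \<theta> p2 \<noteq> 0) \<or> (g p2 = y \<and> hb ?S \<alpha> \<theta> p2 \<noteq> 0)"
      using hm_nonzero[of ?S f g \<theta> \<alpha> y] y by (auto simp: supp_def)
    have p12: "p1 \<in> Q" "p2 \<in> Q" using p1(1) p2(1) SQ by auto
    have c12: "p1 \<subseteq> p2 \<or> p2 \<subseteq> p1" using cmp p1(1) p2(1) by blast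
    have ff: "f p1 \<subseteq> f p2 \<or> f p2 \<subseteq> f p1" using c12 fmono[OF p12] fmono[OF p12(2,1)] by blast
    have gg: "g p1 \<subseteq> g p2 \<or> g p2 \<subseteq> g p1" using c12 gmono[OF p12] gmono[OF p12(2,1)] by blast
    show "x \<subseteq> y \<or> y \<subseteq> x"
      using p1(2) p2(2) ff gg key[OF p1(1) p2(1)] key[OF p2(1) p1(1)] by blast
  qed
  have "\<forall>r. 0 \<le> ?\<beta> r"
  proof
    fix r show "0 \<le> ?\<beta> r" by (rule hm_nonneg) (rule nn)
  qed
  thus ?thesis using chain sum1 by (simp add: geom_def)
qed

lemma hm_one:
  assumes a: "\<alpha> \<in> geom Q" shows "hm (supp \<alpha>) f g 1 \<alpha> = nerve_map f \<alpha>"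
proof
  fix r
  have "hm (supp \<alpha>) f g 1 \<alpha> r = (\<Sum>p\<in>supp \<alpha>. if f p = r then \<alpha> p else 0)"
    unfolding hm_def
  proof (intro sum.cong refl)
    fix p assume p: "p \<in> supp \<alpha>"
    have b: "0 \<le> cs (supp \<alpha>) \<alpha> p - \<alpha> p" "cs (supp \<alpha>) \<alpha> p \<le> 1" using cs_bounds[OF a p] by auto
    have "ha (supp \<alpha>) \<alpha> 1 p = \<alpha> p" unfolding ha_def using b geom_nonneg[OF a, of p] by (simp add: min_def)
    moreover have "hb (supp \<alpha>) \<alpha> 1 p = 0" unfolding hb_def using b geom_nonneg[OF a, of p] by simp
    ultimately show "(if f p = r then ha (supp \<alpha>) \<alpha> 1 p else 0) + (if g p = r then hb (supp \<alpha>) \<alpha> 1 p else 0)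
         = (if f p = r then \<alpha> p else 0)" by simp
  qed
  also have "\<dots> = nerve_map f \<alpha> r"
    unfolding nerve_map_alt using geom_finite[OF a] by (simp add: sum.inter_filter)
  finally show "hm (supp \<alpha>) f g 1 \<alpha> r = nerve_map f \<alpha> r" .
qed

lemma hm_zero:
  assumes a: "\<alpha> \<in> geom Q" shows "hm (supp \<alpha>) f g 0 \<alpha> = nerve_map g \<alpha>"
proof
  fix r
  have "hm (supp \<alpha>) f g 0 \<alpha> r = (\<Sum>p\<in>supp \<alpha>. if g p = r then \<alpha> p else 0)"
    unfolding hm_def
  proof (intro sum.cong refl)
    fix p assume p: "p \<in> supp \<alpha>"
    have b: "0 \<le> cs (supp \<alpha>) \<alpha> p - \<alpha> p" "cs (supp \<alpha>) \<alpha> p \<le> 1" using cs_bounds[OF a p] by auto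
    have "hb (supp \<alpha>) \<alpha> 0 p = \<alpha> p" unfolding hb_def using b geom_nonneg[OF a, of p] by simp
    moreover have "ha (supp \<alpha>) \<alpha> 0 p = 0" unfolding ha_def using b geom_nonneg[OF a, of p] by simp
    ultimately show "(if f p = r then ha (supp \<alpha>) \<alpha> 0 p else 0) + (if g p = r then hb (supp \<alpha>) \<alpha> 0 p else 0)
         = (if g p = r then \<alpha> p else 0)" by simp
  qed
  also have "\<dots> = nerve_map g \<alpha> r"
    unfolding nerve_map_alt using geom_finite[OF a] by (simp add: sum.inter_filter)
  finally show "hm (supp \<alpha>) f g 0 \<alpha> r = nerve_map g \<alpha> r" .
qed

lemma hm_fix:
  assumes "\<And>p. p \<in> supp \<alpha> \<Longrightarrow> f p = g p" "finite (supp \<alpha>)"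
  shows "hm (supp \<alpha>) f g \<theta> \<alpha> = nerve_map f \<alpha>"
proof
  fix r
  have "hm (supp \<alpha>) f g \<theta> \<alpha> r = (\<Sum>p\<in>supp \<alpha>. if f p = r then \<alpha> p else 0)"
    unfolding hm_def
  proof (intro sum.cong refl)
    fix p assume p: "p \<in> supp \<alpha>"
    show "(if f p = r then ha (supp \<alpha>) \<alpha> \<theta> p else 0) + (if g p = r then hb (supp \<alpha>) \<alpha> \<theta> p else 0)
         = (if f p = r then \<alpha> p else 0)" using assms(1)[OF p] ha_hb[of "supp \<alpha>" \<alpha> \<theta> p] by simp
  qed
  also have "\<dots> = nerve_map f \<alpha> r"
    unfolding nerve_map_alt using assms(2) by (simp add: sum.inter_filter)
  finally show "hm (supp \<alpha>) f g \<theta> \<alpha> r = nerve_map f \<alpha> r" .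
qed


lemma cont_snd_proj:
  "continuous_map (prod_topology X (subtopology (powertop_real UNIV) S)) euclideanreal (\<lambda>x. snd x q)"
proof -
  have "continuous_map (subtopology (powertop_real UNIV) S) euclideanreal (\<lambda>\<alpha>. \<alpha> q)"
    by (rule continuous_map_from_subtopology) (rule continuous_map_product_projection, simp)
  thus ?thesis using continuous_map_compose[OF continuous_map_snd] by (simp add: o_def) blast
qed

lemma cont_fst_time:
  "continuous_map (prod_topology (top_of_set T) Y) euclideanreal fst"
  using continuous_map_compose[OF continuous_map_fst continuous_map_from_subtopology[OF continuous_map_id]]
  by (simp add: o_def)

lemma hm_cont:
  assumes "finite c"
  shows "continuous_map (prod_topology (top_of_set {0..1}) (subtopology (powertop_real UNIV) (cell c)))
           (powertop_real UNIV) (\<lambda>x. hm c f g (fst x) (snd x))"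
  unfolding continuous_map_componentwise_UNIV
proof
  fix r
  let ?Z = "prod_topology (top_of_set {0..1::real}) (subtopology (powertop_real UNIV) (cell c))"
  have pr: "\<And>q. continuous_map ?Z euclideanreal (\<lambda>x. snd x q)" by (rule cont_snd_proj)
  have tm: "continuous_map ?Z euclideanreal fst" by (rule cont_fst_time)
  have cs: "continuous_map ?Z euclideanreal (\<lambda>x. cs c (snd x) p)" for p
    unfolding cs_def using assms by (intro continuous_map_sum pr) auto
  have a: "continuous_map ?Z euclideanreal (\<lambda>x. ha c (snd x) (fst x) p)" for p
    unfolding ha_def by (intro continuous_intros cs tm pr)
  have b: "continuous_map ?Z euclideanreal (\<lambda>x. hb c (snd x) (fst x) p)" for p
    unfolding hb_def by (intro continuous_intros cs tm pr)
  have t: "continuous_map ?Z euclideanreal (\<lambda>x. (if f p = r then ha c (snd x) (fst x) p else 0) + (if g p = r then hb c (snd x) (fst x) p else 0))" for p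
    by (cases "f p = r"; cases "g p = r") (simp_all add: a b continuous_intros)
  show "continuous_map ?Z euclideanreal (\<lambda>x. hm c f g (fst x) (snd x) r)"
    unfolding hm_def using assms by (intro continuous_map_sum t)
qed


lemma nerve_homotopy:
  fixes f g :: "'p set \<Rightarrow> 'q set"
  assumes fQ: "\<And>p. p \<in> Q \<Longrightarrow> f p \<in> Q'" and gQ: "\<And>p. p \<in> Q \<Longrightarrow> g p \<in> Q'"
    and fmono: "\<And>p q. p \<in> Q \<Longrightarrow> q \<in> Q \<Longrightarrow> p \<subseteq> q \<Longrightarrow> f p \<subseteq> f q"
    and gmono: "\<And>p q. p \<in> Q \<Longrightarrow> q \<in> Q \<Longrightarrow> p \<subseteq> q \<Longrightarrow> g p \<subseteq> g q"
    and fg: "\<And>p. p \<in> Q \<Longrightarrow> f p \<subseteq> g p"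
  shows "homotopic_with (\<lambda>k. \<forall>\<alpha>\<in>geom Q. (\<forall>p\<in>supp \<alpha>. f p = g p) \<longrightarrow> k \<alpha> = nerve_map f \<alpha>)
           (geom_top Q) (geom_top Q') (nerve_map g) (nerve_map f)"
proof -
  let ?P = "\<lambda>k. \<forall>\<alpha>\<in>geom Q. (\<forall>p\<in>supp \<alpha>. f p = g p) \<longrightarrow> k \<alpha> = nerve_map f \<alpha>"
  have cont: "continuous_map (prod_topology (top_of_set {0..1}) (geom_top Q)) (geom_top Q') (hmap f g)"
  proof (rule continuous_map_from_I_geom_top)
    fix c assume c: "c \<in> chains Q"
    have fc: "finite c" using chainsD(2)[OF c] .
    show "continuous_map (prod_topology (top_of_set {0..1}) (subtopology (powertop_real UNIV) (cell c)))
            (geom_top Q') (hmap f g)"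
    proof (rule continuous_map_into_geom_top[where D="f ` c \<union> g ` c"])
      show "continuous_map (prod_topology (top_of_set {0..1}) (subtopology (powertop_real UNIV) (cell c)))
              (powertop_real UNIV) (hmap f g)"
      proof (rule continuous_map_eq[OF hm_cont[OF fc]])
        fix x assume "x \<in> topspace (prod_topology (top_of_set {0..1::real}) (subtopology (powertop_real UNIV) (cell c)))"
        hence "snd x \<in> cell c" by auto
        thus "hm c f g (fst x) (snd x) = hmap f g x"
          unfolding hmap_def using hm_eq[OF fc cell_supp] by blast
      qed
      show "finite (f ` c \<union> g ` c)" using fc by simp
      fix x assume "x \<in> topspace (prod_topology (top_of_set {0..1::real}) (subtopology (powertop_real UNIV) (cell c)))"
      hence x: "snd x \<in> cell c" by auto
      hence xg: "snd x \<in> geom Q" using cell_subset_geom[OF c] by blast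
      show "hmap f g x \<in> geom Q'" unfolding hmap_def
        by (rule hm_geom[OF xg fQ gQ fmono gmono fg])
      show "supp (hmap f g x) \<subseteq> f ` c \<union> g ` c"
        unfolding hmap_def using hm_supp[of "supp (snd x)" f g "fst x" "snd x"] cell_supp[OF x] by blast
    qed
  qed
  have h: "homotopic_with ?P (geom_top Q) (geom_top Q') (\<lambda>\<alpha>. hmap f g (0,\<alpha>)) (\<lambda>\<alpha>. hmap f g (1,\<alpha>))"
    unfolding homotopic_with_def
  proof (intro exI conjI allI ballI impI)
    show "continuous_map (prod_topology (top_of_set {0..1}) (geom_top Q)) (geom_top Q') (hmap f g)" by (rule cont)
    fix t \<alpha> assume "t \<in> {0..1::real}" "\<alpha> \<in> geom Q" "\<forall>p\<in>supp \<alpha>. f p = g p"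
    thus "hmap f g (t, \<alpha>) = nerve_map f \<alpha>"
      unfolding hmap_def using hm_fix[of \<alpha> f g t] geom_finite by auto
  qed auto
  show ?thesis
  proof (rule homotopic_with_eq[OF h])
    fix \<alpha> assume "\<alpha> \<in> topspace (geom_top Q)"
    hence a: "\<alpha> \<in> geom Q" by simp
    show "nerve_map g \<alpha> = hmap f g (0, \<alpha>)" unfolding hmap_def using hm_zero[OF a, of f g] by simp
    show "nerve_map f \<alpha> = hmap f g (1, \<alpha>)" unfolding hmap_def using hm_one[OF a, of f g] by simp
  next
    fix h k :: "('p set \<Rightarrow> real) \<Rightarrow> 'q set \<Rightarrow> real"
    assume "\<And>x. x \<in> topspace (geom_top Q) \<Longrightarrow> h x = k x"
    thus "?P h \<longleftrightarrow> ?P k" by simp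
  qed
qed

lemma nerve_map_cont:
  fixes h :: "'p set \<Rightarrow> 'q set"
  assumes hQ: "\<And>p. p \<in> Q \<Longrightarrow> h p \<in> Q'"
    and hmono: "\<And>p q. p \<in> Q \<Longrightarrow> q \<in> Q \<Longrightarrow> p \<subseteq> q \<Longrightarrow> h p \<subseteq> h q"
  shows "continuous_map (geom_top Q) (geom_top Q') (nerve_map h)"
  using homotopic_with_imp_continuous_maps[OF nerve_homotopy[of Q h Q' h, OF hQ hQ hmono hmono]] by blast

lemma sphere_base_in: "sphere_base \<in> topspace (nsphere n)"
  unfolding sphere_base_def by (rule in_topspace_nsphere)

lemma whe_retract:
  assumes contphi: "continuous_map X Y \<phi>" and contrho: "continuous_map Y X \<rho>"
    and rp: "\<And>x. x \<in> topspace X \<Longrightarrow> \<rho> (\<phi> x) = x"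
    and hom: "homotopic_with (\<lambda>k. \<forall>x\<in>topspace X. k (\<phi> x) = \<phi> x) Y Y id (\<phi> \<circ> \<rho>)"
  shows "weak_homotopy_equivalence X Y \<phi>"
  unfolding weak_homotopy_equivalence_def
proof (intro conjI contphi)
  show "\<forall>y\<in>topspace Y. \<exists>x\<in>topspace X. path_component_of Y (\<phi> x) y"
  proof
  fix y assume y: "y \<in> topspace Y"
  obtain h where h: "continuous_map (prod_topology (top_of_set {0..1::real}) Y) Y h"
      "\<And>x. h (0, x) = x" "\<And>x. h (1, x) = \<phi> (\<rho> x)"
    using hom unfolding homotopic_with_def by auto
  have "pathin Y (\<lambda>t. h (t, y))"
    unfolding pathin_def
    by (rule continuous_map_compose[OF _ h(1), unfolded o_def])
       (simp add: continuous_map_pairwise o_def y)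
  hence "path_component_of Y y (\<phi> (\<rho> y))"
    unfolding path_component_of_def using h(2,3) by force
  hence "path_component_of Y (\<phi> (\<rho> y)) y" by (rule path_component_of_sym)
  moreover have "\<rho> y \<in> topspace X" using contrho y by (simp add: continuous_map_def Pi_iff)
  ultimately show "\<exists>x\<in>topspace X. path_component_of Y (\<phi> x) y" by blast
  qed
next
  show "\<forall>n. \<forall>x\<in>topspace X.
        (\<forall>g h. continuous_map (nsphere n) X g \<and> g sphere_base = x \<and>
               continuous_map (nsphere n) X h \<and> h sphere_base = x \<and>
               homotopic_with (\<lambda>k. k sphere_base = \<phi> x) (nsphere n) Y (\<phi> \<circ> g) (\<phi> \<circ> h)
               \<longrightarrow> homotopic_with (\<lambda>k. k sphere_base = x) (nsphere n) X g h) \<and>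
        (\<forall>k. continuous_map (nsphere n) Y k \<and> k sphere_base = \<phi> x \<longrightarrow>
             (\<exists>g. continuous_map (nsphere n) X g \<and> g sphere_base = x \<and>
                  homotopic_with (\<lambda>k. k sphere_base = \<phi> x) (nsphere n) Y (\<phi> \<circ> g) k))"
  proof (intro allI ballI, rule conjI)
  fix n x assume x: "x \<in> topspace X"
  have sb: "sphere_base \<in> topspace (nsphere n)" by (rule sphere_base_in)
  show "\<forall>g h. continuous_map (nsphere n) X g \<and> g sphere_base = x \<and>
               continuous_map (nsphere n) X h \<and> h sphere_base = x \<and>
               homotopic_with (\<lambda>k. k sphere_base = \<phi> x) (nsphere n) Y (\<phi> \<circ> g) (\<phi> \<circ> h)
               \<longrightarrow> homotopic_with (\<lambda>k. k sphere_base = x) (nsphere n) X g h"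
  proof (intro allI impI, elim conjE)
    fix g h assume g: "continuous_map (nsphere n) X g" "g sphere_base = x"
      and h: "continuous_map (nsphere n) X h" "h sphere_base = x"
      and H: "homotopic_with (\<lambda>k. k sphere_base = \<phi> x) (nsphere n) Y (\<phi> \<circ> g) (\<phi> \<circ> h)"
    have "homotopic_with (\<lambda>k. k sphere_base = x) (nsphere n) X (\<rho> \<circ> (\<phi> \<circ> g)) (\<rho> \<circ> (\<phi> \<circ> h))"
      by (rule homotopic_with_compose_continuous_map_left[OF H contrho]) (simp add: rp x)
    thus "homotopic_with (\<lambda>k. k sphere_base = x) (nsphere n) X g h"
    proof (rule homotopic_with_eq)
      fix z assume "z \<in> topspace (nsphere n)"
      hence "g z \<in> topspace X" using g(1) by (auto simp: continuous_map_def)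
      thus "g z = (\<rho> \<circ> (\<phi> \<circ> g)) z" by (simp add: rp)
    next
      fix z assume "z \<in> topspace (nsphere n)"
      hence "h z \<in> topspace X" using h(1) by (auto simp: continuous_map_def)
      thus "h z = (\<rho> \<circ> (\<phi> \<circ> h)) z" by (simp add: rp)
    next
      fix h k :: "(nat \<Rightarrow> real) \<Rightarrow> 'a" assume "\<And>z. z \<in> topspace (nsphere n) \<Longrightarrow> h z = k z"
      thus "(h sphere_base = x) = (k sphere_base = x)" using sb by simp
    qed
  qed
  show "\<forall>k. continuous_map (nsphere n) Y k \<and> k sphere_base = \<phi> x \<longrightarrow>
             (\<exists>g. continuous_map (nsphere n) X g \<and> g sphere_base = x \<and>
                  homotopic_with (\<lambda>k. k sphere_base = \<phi> x) (nsphere n) Y (\<phi> \<circ> g) k)"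
  proof (intro allI impI, elim conjE)
    fix k assume k: "continuous_map (nsphere n) Y k" "k sphere_base = \<phi> x"
    have H: "homotopic_with (\<lambda>j. j sphere_base = \<phi> x) (nsphere n) Y (id \<circ> k) ((\<phi> \<circ> \<rho>) \<circ> k)"
      by (rule homotopic_with_compose_continuous_map_right[OF hom k(1)]) (simp add: k(2) x)
    have "homotopic_with (\<lambda>j. j sphere_base = \<phi> x) (nsphere n) Y (\<phi> \<circ> (\<rho> \<circ> k)) k"
      using homotopic_with_symD[OF H] by (simp add: o_assoc)
    moreover have "continuous_map (nsphere n) X (\<rho> \<circ> k)"
      using continuous_map_compose[OF k(1) contrho] .
    moreover have "(\<rho> \<circ> k) sphere_base = x" using k(2) rp[OF x] by simp
    ultimately show "\<exists>g. continuous_map (nsphere n) X g \<and> g sphere_base = x \<and>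
                  homotopic_with (\<lambda>k. k sphere_base = \<phi> x) (nsphere n) Y (\<phi> \<circ> g) k" by blast
  qed
  qed
qed


lemma whe_contractible:
  assumes contf: "continuous_map X Y f"
    and hX: "\<And>x. x \<in> topspace X \<Longrightarrow> homotopic_with (\<lambda>k. k x = x) X X id (\<lambda>_. x)"
    and hY: "\<And>x. x \<in> topspace X \<Longrightarrow> homotopic_with (\<lambda>k. k (f x) = f x) Y Y id (\<lambda>_. f x)"
    and x0: "x0 \<in> topspace X"
  shows "weak_homotopy_equivalence X Y f"
  unfolding weak_homotopy_equivalence_def
proof (intro conjI contf)
  show "\<forall>y\<in>topspace Y. \<exists>x\<in>topspace X. path_component_of Y (f x) y"
  proof
    fix y assume y: "y \<in> topspace Y"
    obtain h where h: "continuous_map (prod_topology (top_of_set {0..1::real}) Y) Y h"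
        "\<And>x. h (0, x) = x" "\<And>x. h (1, x) = f x0"
      using hY[OF x0] unfolding homotopic_with_def by auto
    have "pathin Y (\<lambda>t. h (t, y))"
      unfolding pathin_def
      by (rule continuous_map_compose[OF _ h(1), unfolded o_def])
         (simp add: continuous_map_pairwise o_def y)
    hence "path_component_of Y y (f x0)"
      unfolding path_component_of_def using h(2,3) by force
    hence "path_component_of Y (f x0) y" by (rule path_component_of_sym)
    thus "\<exists>x\<in>topspace X. path_component_of Y (f x) y" using x0 by blast
  qed
next
  show "\<forall>n. \<forall>x\<in>topspace X.
        (\<forall>g h. continuous_map (nsphere n) X g \<and> g sphere_base = x \<and>
               continuous_map (nsphere n) X h \<and> h sphere_base = x \<and>
               homotopic_with (\<lambda>k. k sphere_base = f x) (nsphere n) Y (f \<circ> g) (f \<circ> h)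
               \<longrightarrow> homotopic_with (\<lambda>k. k sphere_base = x) (nsphere n) X g h) \<and>
        (\<forall>k. continuous_map (nsphere n) Y k \<and> k sphere_base = f x \<longrightarrow>
             (\<exists>g. continuous_map (nsphere n) X g \<and> g sphere_base = x \<and>
                  homotopic_with (\<lambda>k. k sphere_base = f x) (nsphere n) Y (f \<circ> g) k))"
  proof (intro allI ballI, rule conjI)
    fix n x assume x: "x \<in> topspace X"
    show "\<forall>g h. continuous_map (nsphere n) X g \<and> g sphere_base = x \<and>
               continuous_map (nsphere n) X h \<and> h sphere_base = x \<and>
               homotopic_with (\<lambda>k. k sphere_base = f x) (nsphere n) Y (f \<circ> g) (f \<circ> h)
               \<longrightarrow> homotopic_with (\<lambda>k. k sphere_base = x) (nsphere n) X g h"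
    proof (intro allI impI, elim conjE)
      fix g h assume g: "continuous_map (nsphere n) X g" "g sphere_base = x"
        and h: "continuous_map (nsphere n) X h" "h sphere_base = x"
      have Hg: "homotopic_with (\<lambda>j. j sphere_base = x) (nsphere n) X (id \<circ> g) ((\<lambda>_. x) \<circ> g)"
        by (rule homotopic_with_compose_continuous_map_right[OF hX[OF x] g(1)]) (simp add: g(2))
      have Hh: "homotopic_with (\<lambda>j. j sphere_base = x) (nsphere n) X (id \<circ> h) ((\<lambda>_. x) \<circ> h)"
        by (rule homotopic_with_compose_continuous_map_right[OF hX[OF x] h(1)]) (simp add: h(2))
      have Hg': "homotopic_with (\<lambda>j. j sphere_base = x) (nsphere n) X g (\<lambda>_. x)" using Hg by simp
      have Hh': "homotopic_with (\<lambda>j. j sphere_base = x) (nsphere n) X h (\<lambda>_. x)" using Hh by simp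
      show "homotopic_with (\<lambda>k. k sphere_base = x) (nsphere n) X g h"
        using homotopic_with_trans[OF Hg' homotopic_with_symD[OF Hh']] .
    qed
    show "\<forall>k. continuous_map (nsphere n) Y k \<and> k sphere_base = f x \<longrightarrow>
             (\<exists>g. continuous_map (nsphere n) X g \<and> g sphere_base = x \<and>
                  homotopic_with (\<lambda>k. k sphere_base = f x) (nsphere n) Y (f \<circ> g) k)"
    proof (intro allI impI, elim conjE)
      fix k assume k: "continuous_map (nsphere n) Y k" "k sphere_base = f x"
      have H: "homotopic_with (\<lambda>j. j sphere_base = f x) (nsphere n) Y (id \<circ> k) ((\<lambda>_. f x) \<circ> k)"
        by (rule homotopic_with_compose_continuous_map_right[OF hY[OF x] k(1)]) (simp add: k(2))
      have "homotopic_with (\<lambda>j. j sphere_base = f x) (nsphere n) Y (f \<circ> (\<lambda>_. x)) k"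
        using homotopic_with_symD[OF H] by simp
      moreover have "continuous_map (nsphere n) X (\<lambda>_. x)" using x by simp
      ultimately show "\<exists>g. continuous_map (nsphere n) X g \<and> g sphere_base = x \<and>
                  homotopic_with (\<lambda>k. k sphere_base = f x) (nsphere n) Y (f \<circ> g) k" by blast
    qed
  qed
qed


lemma union_chain_mem:
  assumes "finite F" "F \<noteq> {}" "\<forall>x\<in>F. \<forall>y\<in>F. x \<subseteq> y \<or> y \<subseteq> x"
  shows "\<Union>F \<in> F"
  using assms
proof (induction F rule: finite_ne_induct)
  case (singleton x) thus ?case by simp
next
  case (insert x F)
  have u: "\<Union>F \<in> F" using insert by blast
  have "x \<subseteq> \<Union>F \<or> \<Union>F \<subseteq> x" using insert.prems u by blast
  thus ?case using u by (auto simp: Un_absorb1 Un_absorb2)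
qed

lemma cell_convex:
  assumes "\<beta> \<in> cell c" "\<gamma> \<in> cell c" "0 \<le> t" "t \<le> 1"
  shows "(\<lambda>q. (1 - t) * \<beta> q + t * \<gamma> q) \<in> cell c"
proof -
  have "sum (\<lambda>q. (1 - t) * \<beta> q + t * \<gamma> q) c = (1 - t) * sum \<beta> c + t * sum \<gamma> c"
    by (simp add: sum.distrib sum_distrib_left)
  thus ?thesis using assms by (simp add: cell_def)
qed

lemma straight_homotopy:
  fixes Q :: "'p set set" and r :: "'p set \<Rightarrow> 'p set"
  assumes x: "x \<in> cell c'" and c': "c' \<in> chains Q"
    and rQ: "\<And>p. p \<in> Q \<Longrightarrow> r p \<in> c'"
    and rmono: "\<And>p q. p \<in> Q \<Longrightarrow> q \<in> Q \<Longrightarrow> p \<subseteq> q \<Longrightarrow> r p \<subseteq> r q"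
    and rx: "nerve_map r x = x"
  shows "homotopic_with (\<lambda>k. k x = x) (geom_top Q) (geom_top Q) (nerve_map r) (\<lambda>_. x)"
proof -
  define K where "K = (\<lambda>z::real \<times> ('p set \<Rightarrow> real). \<lambda>q. (1 - fst z) * nerve_map r (snd z) q + fst z * x q)"
  have fc': "finite c'" using chainsD(2)[OF c'] .
  have c'Q: "c' \<subseteq> Q" using chainsD(1)[OF c'] .
  have rQ': "\<And>p. p \<in> Q \<Longrightarrow> r p \<in> Q" using rQ c'Q by blast
  have cont: "continuous_map (prod_topology (top_of_set {0..1}) (geom_top Q)) (geom_top Q) K"
  proof (rule continuous_map_from_I_geom_top)
    fix c assume c: "c \<in> chains Q"
    have fc: "finite c" using chainsD(2)[OF c] .
    let ?Z = "prod_topology (top_of_set {0..1::real}) (subtopology (powertop_real UNIV) (cell c))"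
    show "continuous_map ?Z (geom_top Q) K"
    proof (rule continuous_map_into_geom_top[where D=c'])
      have pr: "\<And>q. continuous_map ?Z euclideanreal (\<lambda>x. snd x q)" by (rule cont_snd_proj)
      have tm: "continuous_map ?Z euclideanreal fst" by (rule cont_fst_time)
      have "continuous_map ?Z (powertop_real UNIV) (\<lambda>z. \<lambda>q. (1 - fst z) * sum (snd z) {p \<in> c. r p = q} + fst z * x q)"
        unfolding continuous_map_componentwise_UNIV
        using fc by (intro allI continuous_intros pr tm) auto
      thus "continuous_map ?Z (powertop_real UNIV) K"
      proof (rule continuous_map_eq)
        fix z assume "z \<in> topspace ?Z"
        hence "snd z \<in> cell c" by auto
        thus "(\<lambda>q. (1 - fst z) * sum (snd z) {p \<in> c. r p = q} + fst z * x q) = K z"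
          unfolding K_def using nerve_map_cell[OF _ fc, of "snd z" r] by auto
      qed
      show "finite c'" by (rule fc')
      fix z assume "z \<in> topspace ?Z"
      hence z: "snd z \<in> cell c" "fst z \<in> {0..1}" by auto
      have zg: "snd z \<in> geom Q" using z(1) cell_subset_geom[OF c] by blast
      have "nerve_map r (snd z) \<in> geom Q" by (rule nerve_map_geom[OF zg rQ' rmono])
      moreover have "supp (nerve_map r (snd z)) \<subseteq> c'"
        using supp_nerve_map[OF zg, of r] rQ chainsD(1)[OF geom_in_cell_supp(2)[OF zg]] by auto
      ultimately have "nerve_map r (snd z) \<in> cell c'" using geom_in_cell fc' by blast
      hence "K z \<in> cell c'" unfolding K_def using cell_convex[OF _ x] z(2) by auto
      thus "K z \<in> geom Q" "supp (K z) \<subseteq> c'" using cell_subset_geom[OF c'] cell_supp by blast+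
    qed
  qed
  show ?thesis
    unfolding homotopic_with_def
  proof (intro exI conjI allI ballI)
    show "continuous_map (prod_topology (top_of_set {0..1}) (geom_top Q)) (geom_top Q) K" by (rule cont)
    fix t assume "t \<in> {0..1::real}"
    show "K (t, x) = x" unfolding K_def using rx by (auto simp: algebra_simps)
  qed (auto simp: K_def)
qed


lemma pointed_contraction:
  fixes Q :: "'p set set" and \<sigma> :: "'p set"
  assumes x: "x \<in> geom Q" and \<sigma>Q: "\<sigma> \<in> Q"
    and xsig: "\<And>p. p \<in> supp x \<Longrightarrow> \<sigma> \<subseteq> p"
    and eQ: "\<And>\<mu>. \<mu> \<in> Q \<Longrightarrow> \<mu> \<union> \<sigma> \<in> Q"
  shows "homotopic_with (\<lambda>k. k x = x) (geom_top Q) (geom_top Q) id (\<lambda>_. x)"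
proof -
  define c' where "c' = insert \<sigma> (supp x)"
  have chx: "supp x \<in> chains Q" using x by (simp add: geom_def)
  have c'sig: "\<And>p. p \<in> c' \<Longrightarrow> \<sigma> \<subseteq> p" using xsig by (auto simp: c'_def)
  have c'cmp: "\<forall>p\<in>c'. \<forall>q\<in>c'. p \<subseteq> q \<or> q \<subseteq> p"
  proof (intro ballI)
    fix p q assume "p \<in> c'" "q \<in> c'"
    thus "p \<subseteq> q \<or> q \<subseteq> p"
    proof (cases "p = \<sigma> \<or> q = \<sigma>")
      case True thus ?thesis using c'sig \<open>p \<in> c'\<close> \<open>q \<in> c'\<close> by blast
    next
      case False
      hence "p \<in> supp x" "q \<in> supp x" using \<open>p \<in> c'\<close> \<open>q \<in> c'\<close> by (auto simp: c'_def)
      thus ?thesis using chainsD(4)[OF chx] by blast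
    qed
  qed
  have c'fin: "finite c'" using chainsD(2)[OF chx] by (simp add: c'_def)
  have c'Q: "c' \<subseteq> Q" using chainsD(1)[OF chx] \<sigma>Q by (auto simp: c'_def)
  have c': "c' \<in> chains Q" unfolding chains_def using c'cmp c'fin c'Q by (auto simp: c'_def)
  define e where "e = (\<lambda>\<mu>::'p set. \<mu> \<union> \<sigma>)"
  define r where "r = (\<lambda>\<mu>::'p set. \<Union>{p \<in> c'. p \<subseteq> \<mu> \<union> \<sigma>})"
  have r_in: "r \<mu> \<in> c'" for \<mu>
  proof -
    have "\<Union>{p \<in> c'. p \<subseteq> \<mu> \<union> \<sigma>} \<in> {p \<in> c'. p \<subseteq> \<mu> \<union> \<sigma>}"
    proof (rule union_chain_mem)
      show "finite {p \<in> c'. p \<subseteq> \<mu> \<union> \<sigma>}" using c'fin by simp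
      show "{p \<in> c'. p \<subseteq> \<mu> \<union> \<sigma>} \<noteq> {}" by (auto simp: c'_def)
      show "\<forall>x\<in>{p \<in> c'. p \<subseteq> \<mu> \<union> \<sigma>}. \<forall>y\<in>{p \<in> c'. p \<subseteq> \<mu> \<union> \<sigma>}. x \<subseteq> y \<or> y \<subseteq> x"
        using c'cmp by blast
    qed
    thus ?thesis by (simp add: r_def)
  qed
  have r_mono: "r p \<subseteq> r q" if "p \<subseteq> q" for p q
    unfolding r_def using that by blast
  have r_e: "r p \<subseteq> e p" for p unfolding r_def e_def by blast
  have r_fix: "r p = p" if "p \<in> c'" for p
  proof -
    have "p \<union> \<sigma> = p" using c'sig[OF that] by blast
    hence "{q \<in> c'. q \<subseteq> p \<union> \<sigma>} = {q \<in> c'. q \<subseteq> p}" by simp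
    thus ?thesis unfolding r_def using that by auto
  qed
  have e_fix: "e p = p" if "p \<in> c'" for p using c'sig[OF that] by (auto simp: e_def)
  have sx: "supp x \<subseteq> c'" by (auto simp: c'_def)
  have xt: "x \<in> topspace (geom_top Q)" using x by simp
  have idx: "nerve_map (\<lambda>p. p) x = x" by (rule nerve_map_id_on) simp
  have rx: "nerve_map r x = x" using r_fix sx by (intro nerve_map_id_on) blast
  have H1: "homotopic_with (\<lambda>k. \<forall>\<alpha>\<in>geom Q. (\<forall>p\<in>supp \<alpha>. p = e p) \<longrightarrow> k \<alpha> = nerve_map (\<lambda>p. p) \<alpha>)
           (geom_top Q) (geom_top Q) (nerve_map e) (nerve_map (\<lambda>p. p))"
    by (rule nerve_homotopy) (auto simp: e_def eQ)
  have A: "homotopic_with (\<lambda>k. k x = x) (geom_top Q) (geom_top Q) (nerve_map (\<lambda>p. p)) (nerve_map e)"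
  proof (rule homotopic_with_symD, rule homotopic_with_mono[OF H1])
    fix k assume "\<forall>\<alpha>\<in>geom Q. (\<forall>p\<in>supp \<alpha>. p = e p) \<longrightarrow> k \<alpha> = nerve_map (\<lambda>p. p) \<alpha>"
    moreover have "\<forall>p\<in>supp x. p = e p" using e_fix sx by auto
    ultimately show "k x = x" using x idx by auto
  qed
  have A': "homotopic_with (\<lambda>k. k x = x) (geom_top Q) (geom_top Q) id (nerve_map e)"
  proof (rule homotopic_with_eq[OF A])
    fix \<alpha> assume "\<alpha> \<in> topspace (geom_top Q)"
    show "id \<alpha> = nerve_map (\<lambda>p. p) \<alpha>" by (simp add: nerve_map_id_on)
  next
    fix \<alpha> assume "\<alpha> \<in> topspace (geom_top Q)"
    show "nerve_map e \<alpha> = nerve_map e \<alpha>" ..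
  next
    fix h k :: "('p set \<Rightarrow> real) \<Rightarrow> 'p set \<Rightarrow> real"
    assume "\<And>\<alpha>. \<alpha> \<in> topspace (geom_top Q) \<Longrightarrow> h \<alpha> = k \<alpha>"
    thus "(h x = x) = (k x = x)" using xt by simp
  qed
  have H2: "homotopic_with (\<lambda>k. \<forall>\<alpha>\<in>geom Q. (\<forall>p\<in>supp \<alpha>. r p = e p) \<longrightarrow> k \<alpha> = nerve_map r \<alpha>)
           (geom_top Q) (geom_top Q) (nerve_map e) (nerve_map r)"
  proof (rule nerve_homotopy)
    show "\<And>p. p \<in> Q \<Longrightarrow> r p \<in> Q" using r_in c'Q by blast
    show "\<And>p. p \<in> Q \<Longrightarrow> e p \<in> Q" by (simp add: e_def eQ)
    show "\<And>p q. p \<in> Q \<Longrightarrow> q \<in> Q \<Longrightarrow> p \<subseteq> q \<Longrightarrow> r p \<subseteq> r q" using r_mono by blast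
    show "\<And>p q. p \<in> Q \<Longrightarrow> q \<in> Q \<Longrightarrow> p \<subseteq> q \<Longrightarrow> e p \<subseteq> e q" by (auto simp: e_def)
    show "\<And>p. p \<in> Q \<Longrightarrow> r p \<subseteq> e p" by (rule r_e)
  qed
  have B: "homotopic_with (\<lambda>k. k x = x) (geom_top Q) (geom_top Q) (nerve_map e) (nerve_map r)"
  proof (rule homotopic_with_mono[OF H2])
    fix k assume "\<forall>\<alpha>\<in>geom Q. (\<forall>p\<in>supp \<alpha>. r p = e p) \<longrightarrow> k \<alpha> = nerve_map r \<alpha>"
    moreover have "\<forall>p\<in>supp x. r p = e p" using e_fix r_fix sx by auto
    ultimately show "k x = x" using x rx by auto
  qed
  have C: "homotopic_with (\<lambda>k. k x = x) (geom_top Q) (geom_top Q) (nerve_map r) (\<lambda>_. x)"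
  proof (rule straight_homotopy[OF _ c'])
    show "x \<in> cell c'" using geom_in_cell[OF x sx c'fin] .
    show "\<And>p. p \<in> Q \<Longrightarrow> r p \<in> c'" using r_in by blast
    show "\<And>p q. p \<in> Q \<Longrightarrow> q \<in> Q \<Longrightarrow> p \<subseteq> q \<Longrightarrow> r p \<subseteq> r q" using r_mono by blast
    show "nerve_map r x = x" by (rule rx)
  qed
  show ?thesis using homotopic_with_trans[OF homotopic_with_trans[OF A' B] C] .
qed




theorem proposition7p4:
  fixes K :: "'v set set" and X Y :: "'v set"
  assumes "simplicial_complex K"
    and "X \<union> Y = vertex_set K"
  defines "A \<equiv> X \<inter> Y"
  defines "P \<equiv> {\<sigma> \<in> K. \<sigma> \<subseteq> X \<or> \<sigma> \<subseteq> Y \<or> \<sigma> \<inter> A \<noteq> {}}"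
  shows "(\<forall>\<sigma>\<in>P. contractible_space (geom_top (up_poset P \<sigma>)) \<and>
            weak_homotopy_equivalence (geom_top (up_poset P \<sigma>)) (geom_top (star K \<sigma>))
              (nerve_map (\<lambda>\<tau>. \<tau>)))
       \<and> (\<forall>\<sigma>\<in>K - P.
            weak_homotopy_equivalence (geom_top (star_in K \<sigma> A)) (geom_top (up_poset P \<sigma>))
              (nerve_map (\<lambda>\<mu>. \<mu> \<union> \<sigma>)))"
proof -
  have K_fin: "\<And>s. s \<in> K \<Longrightarrow> finite s" and K_ne: "\<And>s. s \<in> K \<Longrightarrow> s \<noteq> {}"
    and K_sub: "\<And>s t. s \<in> K \<Longrightarrow> t \<subseteq> s \<Longrightarrow> t \<noteq> {} \<Longrightarrow> t \<in> K"
    using assms(1) unfolding simplicial_complex_def by blast+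
  have PK: "P \<subseteq> K" by (auto simp: P_def)
  show ?thesis
  proof (intro conjI ballI)
    fix \<sigma> assume \<sigma>P: "\<sigma> \<in> P"
    let ?U = "up_poset P \<sigma>"
    let ?S = "star K \<sigma>"
    have \<sigma>K: "\<sigma> \<in> K" using \<sigma>P PK by blast
    have \<sigma>U: "\<sigma> \<in> ?U" using \<sigma>P by (simp add: up_poset_def)
    define \<delta> where "\<delta> = (\<lambda>p. if p = \<sigma> then 1 else (0::real))"
    have supp\<delta>: "supp \<delta> = {\<sigma>}" by (auto simp: supp_def \<delta>_def)
    have \<delta>U: "\<delta> \<in> geom ?U"
      unfolding geom_def mem_Collect_eq supp\<delta> using \<sigma>U by (simp add: \<delta>_def chains_def)
    have hU: "homotopic_with (\<lambda>k. k x = x) (geom_top ?U) (geom_top ?U) id (\<lambda>_. x)"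
      if x: "x \<in> geom ?U" for x
    proof (rule pointed_contraction[OF x \<sigma>U])
      fix p assume "p \<in> supp x"
      hence "p \<in> ?U" using x by (auto simp: geom_def chains_def)
      thus "\<sigma> \<subseteq> p" by (simp add: up_poset_def)
    next
      fix \<mu> assume "\<mu> \<in> ?U"
      thus "\<mu> \<union> \<sigma> \<in> ?U" by (auto simp: up_poset_def Un_absorb2)
    qed
    show "contractible_space (geom_top ?U)"
      unfolding contractible_space_def
      using homotopic_with_mono[OF hU[OF \<delta>U], of "\<lambda>_. True"] by blast
    have US: "\<And>\<tau>. \<tau> \<in> ?U \<Longrightarrow> \<tau> \<in> ?S"
      using PK by (auto simp: up_poset_def star_def Un_absorb1)
    show "weak_homotopy_equivalence (geom_top ?U) (geom_top ?S) (nerve_map (\<lambda>\<tau>. \<tau>))"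
    proof (rule whe_contractible)
      show "continuous_map (geom_top ?U) (geom_top ?S) (nerve_map (\<lambda>\<tau>. \<tau>))"
        by (rule nerve_map_cont) (auto intro: US)
      show "\<And>x. x \<in> topspace (geom_top ?U) \<Longrightarrow> homotopic_with (\<lambda>k. k x = x) (geom_top ?U) (geom_top ?U) id (\<lambda>_. x)"
        using hU by simp
      show "\<delta> \<in> topspace (geom_top ?U)" using \<delta>U by simp
      fix x assume "x \<in> topspace (geom_top ?U)"
      hence x: "x \<in> geom ?U" by simp
      have fx: "nerve_map (\<lambda>\<tau>. \<tau>) x = x" by (rule nerve_map_id_on) simp
      have xS: "x \<in> geom ?S" using nerve_map_geom[OF x, of "\<lambda>\<tau>. \<tau>" ?S] US fx by auto
      have "homotopic_with (\<lambda>k. k x = x) (geom_top ?S) (geom_top ?S) id (\<lambda>_. x)"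
      proof (rule pointed_contraction[OF xS])
        show "\<sigma> \<in> ?S" using \<sigma>K by (simp add: star_def)
        fix p assume "p \<in> supp x"
        hence "p \<in> ?U" using x by (auto simp: geom_def chains_def)
        thus "\<sigma> \<subseteq> p" by (simp add: up_poset_def)
      next
        fix \<mu> assume "\<mu> \<in> ?S"
        hence "\<sigma> \<union> \<mu> \<in> K" by (simp add: star_def)
        moreover have "\<sigma> \<union> (\<mu> \<union> \<sigma>) = \<sigma> \<union> \<mu>" "\<mu> \<union> \<sigma> = \<sigma> \<union> \<mu>" by auto
        ultimately show "\<mu> \<union> \<sigma> \<in> ?S" by (simp add: star_def)
      qed
      thus "homotopic_with (\<lambda>k. k (nerve_map (\<lambda>\<tau>. \<tau>) x) = nerve_map (\<lambda>\<tau>. \<tau>) x) (geom_top ?S) (geom_top ?S) id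
          (\<lambda>_. nerve_map (\<lambda>\<tau>. \<tau>) x)" by (simp add: fx)
    qed
  next
    fix \<sigma> assume \<sigma>KP: "\<sigma> \<in> K - P"
    have \<sigma>K: "\<sigma> \<in> K" using \<sigma>KP by blast
    have nX: "\<not> \<sigma> \<subseteq> X" and nY: "\<not> \<sigma> \<subseteq> Y" and nA: "\<sigma> \<inter> A = {}"
      using \<sigma>KP by (auto simp: P_def)
    let ?U = "up_poset P \<sigma>"
    let ?SA = "star_in K \<sigma> A"
    let ?\<psi> = "\<lambda>\<mu>::'v set. \<mu> \<union> \<sigma>"
    let ?\<rho> = "\<lambda>\<tau>::'v set. \<tau> \<inter> A"
    have \<psi>_in: "?\<psi> \<mu> \<in> ?U" if "\<mu> \<in> ?SA" for \<mu>
    proof -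
      have "\<mu> \<subseteq> A" "\<mu> \<noteq> {}" "\<mu> \<union> \<sigma> \<in> K" using that by (auto simp: star_in_def)
      hence "(\<mu> \<union> \<sigma>) \<inter> A \<noteq> {}" by blast
      thus ?thesis using \<open>\<mu> \<union> \<sigma> \<in> K\<close> by (auto simp: up_poset_def P_def)
    qed
    have \<rho>_in: "?\<rho> \<tau> \<in> ?SA" if "\<tau> \<in> ?U" for \<tau>
    proof -
      have t: "\<tau> \<in> K" "\<sigma> \<subseteq> \<tau>" "\<tau> \<subseteq> X \<or> \<tau> \<subseteq> Y \<or> \<tau> \<inter> A \<noteq> {}"
        using that by (auto simp: up_poset_def P_def)
      have ne: "\<tau> \<inter> A \<noteq> {}" using t nX nY by blast
      have s1: "\<tau> \<inter> A \<union> \<sigma> \<subseteq> \<tau>" using t(2) by blast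
      have s2: "\<tau> \<inter> A \<union> \<sigma> \<noteq> {}" using ne by blast
      have "\<tau> \<inter> A \<union> \<sigma> \<in> K" by (rule K_sub[OF t(1) s1 s2])
      thus ?thesis using ne K_fin[OF t(1)] by (auto simp: star_in_def)
    qed
    have \<rho>\<psi>: "?\<rho> (?\<psi> \<mu>) = \<mu>" if "\<mu> \<in> ?SA" for \<mu>
      using that nA by (auto simp: star_in_def)
    have contphi: "continuous_map (geom_top ?SA) (geom_top ?U) (nerve_map ?\<psi>)"
      by (rule nerve_map_cont) (auto intro: \<psi>_in)
    have contrho: "continuous_map (geom_top ?U) (geom_top ?SA) (nerve_map ?\<rho>)"
      by (rule nerve_map_cont) (auto intro: \<rho>_in)
    show "weak_homotopy_equivalence (geom_top ?SA) (geom_top ?U) (nerve_map ?\<psi>)"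
    proof (rule whe_retract[OF contphi contrho])
      fix x assume "x \<in> topspace (geom_top ?SA)"
      hence x: "x \<in> geom ?SA" by simp
      have sx: "supp x \<subseteq> ?SA" using x by (auto simp: geom_def chains_def)
      show "nerve_map ?\<rho> (nerve_map ?\<psi> x) = x"
        unfolding nerve_map_comp[OF x] using \<rho>\<psi> sx by (intro nerve_map_id_on) auto
    next
      let ?f = "?\<psi> \<circ> ?\<rho>"
      have H: "homotopic_with (\<lambda>k. \<forall>\<alpha>\<in>geom ?U. (\<forall>p\<in>supp \<alpha>. ?f p = p) \<longrightarrow> k \<alpha> = nerve_map ?f \<alpha>)
           (geom_top ?U) (geom_top ?U) (nerve_map (\<lambda>p. p)) (nerve_map ?f)"
      proof (rule nerve_homotopy)
        show "\<And>p. p \<in> ?U \<Longrightarrow> ?f p \<in> ?U" using \<psi>_in \<rho>_in by simp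
        show "\<And>p. p \<in> ?U \<Longrightarrow> p \<in> ?U" .
        show "\<And>p q. p \<in> ?U \<Longrightarrow> q \<in> ?U \<Longrightarrow> p \<subseteq> q \<Longrightarrow> ?f p \<subseteq> ?f q" by auto
        show "\<And>p q. p \<in> ?U \<Longrightarrow> q \<in> ?U \<Longrightarrow> p \<subseteq> q \<Longrightarrow> p \<subseteq> q" .
        show "\<And>p. p \<in> ?U \<Longrightarrow> ?f p \<subseteq> p" by (auto simp: up_poset_def)
      qed
      have H': "homotopic_with (\<lambda>k. \<forall>x\<in>topspace (geom_top ?SA). k (nerve_map ?\<psi> x) = nerve_map ?\<psi> x)
           (geom_top ?U) (geom_top ?U) (nerve_map (\<lambda>p. p)) (nerve_map ?f)"
      proof (rule homotopic_with_mono[OF H], intro ballI)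
        fix k x
        assume k: "\<forall>\<alpha>\<in>geom ?U. (\<forall>p\<in>supp \<alpha>. ?f p = p) \<longrightarrow> k \<alpha> = nerve_map ?f \<alpha>"
          and "x \<in> topspace (geom_top ?SA)"
        hence x: "x \<in> geom ?SA" by simp
        have sx: "supp x \<subseteq> ?SA" using x by (auto simp: geom_def chains_def)
        have ag: "nerve_map ?\<psi> x \<in> geom ?U"
          by (rule nerve_map_geom[OF x]) (auto intro: \<psi>_in)
        have fix': "\<forall>p\<in>supp (nerve_map ?\<psi> x). ?f p = p"
          using supp_nerve_map[OF x, of ?\<psi>] \<rho>\<psi> sx by auto
        have "nerve_map ?f (nerve_map ?\<psi> x) = nerve_map ?\<psi> x"
          using fix' by (intro nerve_map_id_on) blast
        thus "k (nerve_map ?\<psi> x) = nerve_map ?\<psi> x" using k ag fix' by auto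
      qed
      show "homotopic_with (\<lambda>k. \<forall>x\<in>topspace (geom_top ?SA). k (nerve_map ?\<psi> x) = nerve_map ?\<psi> x)
           (geom_top ?U) (geom_top ?U) id (nerve_map ?\<psi> \<circ> nerve_map ?\<rho>)"
      proof (rule homotopic_with_eq[OF H'])
        fix \<alpha> assume "\<alpha> \<in> topspace (geom_top ?U)"
        hence a: "\<alpha> \<in> geom ?U" by simp
        show "id \<alpha> = nerve_map (\<lambda>p. p) \<alpha>" by (simp add: nerve_map_id_on)
        show "(nerve_map ?\<psi> \<circ> nerve_map ?\<rho>) \<alpha> = nerve_map ?f \<alpha>"
          using nerve_map_comp[OF a, of ?\<psi> ?\<rho>] by simp
      next
        fix h k :: "('v set \<Rightarrow> real) \<Rightarrow> 'v set \<Rightarrow> real"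
        assume "\<And>\<alpha>. \<alpha> \<in> topspace (geom_top ?U) \<Longrightarrow> h \<alpha> = k \<alpha>"
        moreover have "nerve_map ?\<psi> x \<in> topspace (geom_top ?U)" if "x \<in> topspace (geom_top ?SA)" for x
          using contphi that by (auto simp: continuous_map_def)
        ultimately show "(\<forall>x\<in>topspace (geom_top ?SA). h (nerve_map ?\<psi> x) = nerve_map ?\<psi> x) =
                         (\<forall>x\<in>topspace (geom_top ?SA). k (nerve_map ?\<psi> x) = nerve_map ?\<psi> x)" by auto
      qed
    qed
  qed
qed


end
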